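(* Fix $k$ and $\alpha>0$, and let $\beta\in(0,1)$. If $k>8/(1-\beta)$ and $n$ is sufficiently large, then with high probability over the random $k$-CNF formula $\Phi=\Phi(k,n,\lfloor\alpha n\rfloor)$ with clause set $\mathcal C_\Phi$, every subset $\mathcal C'\subseteq\mathcal C_\Phi$ with $2\le|\mathcal C'|\le2\log n$ contains at least two different clauses $c_1,c_2\in\mathcal C'$ such that for each $i\in\{1,2\}$, $$\Big|\mathrm{vbl}(c_i)\setminus\bigcup_{c'\in\mathcal C'\setminus\{c_i\}}\mathrm{vbl}(c')\Big|\ge\beta k.$$
   Context: The random $k$-CNF formula $\Phi(k,n,m)$ has variables $V=\{v_1,\dots,v_n\}$ and $m$ clauses generated independently, each a disjunction of $k$ literals, each literal chosen uniformly at random with replacement from the $2n$ literals $\{v_1,\dots,v_n,\neg v_1,\dots,\neg v_n\}$. $\mathrm{vbl}(c)$ is the set of (distinct) variables appearing in clause $c$. $\log$ denotes $\log_2$. *)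

theory Defs
  imports "HOL-Probability.Probability"
begin

text \<open>A literal over variables v_0..v_(n-1) is a pair (i, s) with i < n; s = True means the
  positive literal v_i, s = False the negated literal. A k-CNF formula with m clauses is a
  function F with F c j = j-th literal of clause c, for c < m and j < k (extensional).\<close>

definition literals :: "nat \<Rightarrow> (nat \<times> bool) set" where
  "literals n = {..<n} \<times> UNIV"

definition kcnf_formulas :: "nat \<Rightarrow> nat \<Rightarrow> nat \<Rightarrow> (nat \<Rightarrow> nat \<Rightarrow> nat \<times> bool) set" where
  "kcnf_formulas k n m = {..<m} \<rightarrow>\<^sub>E ({..<k} \<rightarrow>\<^sub>E literals n)"

text \<open>Random formula Phi(k,n,m): every literal independently uniform over the 2n literals,
  i.e. the uniform distribution on all such formulas.\<close>
definition random_kcnf :: "nat \<Rightarrow> nat \<Rightarrow> nat \<Rightarrow> (nat \<Rightarrow> nat \<Rightarrow> nat \<times> bool) pmf" where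
  "random_kcnf k n m = pmf_of_set (kcnf_formulas k n m)"

definition vbl :: "nat \<Rightarrow> (nat \<Rightarrow> nat \<Rightarrow> nat \<times> bool) \<Rightarrow> nat \<Rightarrow> nat set" where
  "vbl k F c = fst ` (F c) ` {..<k}"

definition good_formula :: "nat \<Rightarrow> real \<Rightarrow> nat \<Rightarrow> nat \<Rightarrow> (nat \<Rightarrow> nat \<Rightarrow> nat \<times> bool) \<Rightarrow> bool" where
  "good_formula k \<beta> n m F \<longleftrightarrow>
     (\<forall>C'. C' \<subseteq> {..<m} \<and> 2 \<le> card C' \<and> real (card C') \<le> 2 * log 2 (real n) \<longrightarrow>
        (\<exists>c1\<in>C'. \<exists>c2\<in>C'. c1 \<noteq> c2 \<and>
           (\<forall>c\<in>{c1, c2}.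
              real (card (vbl k F c - (\<Union>c'\<in>C' - {c}. vbl k F c'))) \<ge> \<beta> * real k)))"

end

theory Submission
  imports Defs "HOL-Real_Asymp.Real_Asymp"
begin


lemma event_eq:
  assumes "C \<subseteq> {..<m}" "T \<subseteq> {..<n}"
  shows "kcnf_formulas k n m \<inter> {F. \<forall>c\<in>C. vbl k F c \<subseteq> T} =
    (\<Pi>\<^sub>E c\<in>{..<m}. if c \<in> C then ({..<k} \<rightarrow>\<^sub>E (T \<times> UNIV)) else ({..<k} \<rightarrow>\<^sub>E literals n))"
proof (rule set_eqI)
  fix F
  show "F \<in> kcnf_formulas k n m \<inter> {F. \<forall>c\<in>C. vbl k F c \<subseteq> T} \<longleftrightarrow>
    F \<in> (\<Pi>\<^sub>E c\<in>{..<m}. if c \<in> C then ({..<k} \<rightarrow>\<^sub>E (T \<times> UNIV)) else ({..<k} \<rightarrow>\<^sub>E literals n))"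
  proof
    assume F: "F \<in> kcnf_formulas k n m \<inter> {F. \<forall>c\<in>C. vbl k F c \<subseteq> T}"
    show "F \<in> (\<Pi>\<^sub>E c\<in>{..<m}. if c \<in> C then ({..<k} \<rightarrow>\<^sub>E (T \<times> UNIV)) else ({..<k} \<rightarrow>\<^sub>E literals n))"
      unfolding PiE_iff
    proof (intro conjI ballI)
      fix c assume c: "c \<in> {..<m}"
      have Fc: "F c \<in> {..<k} \<rightarrow>\<^sub>E literals n" using F c by (auto simp: kcnf_formulas_def)
      show "F c \<in> (if c \<in> C then ({..<k} \<rightarrow>\<^sub>E (T \<times> UNIV)) else ({..<k} \<rightarrow>\<^sub>E literals n))"
      proof (cases "c \<in> C")
        case True
        then have "vbl k F c \<subseteq> T" using F by auto
        then have "\<forall>j<k. fst (F c j) \<in> T" unfolding vbl_def by auto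
        then have "F c \<in> {..<k} \<rightarrow>\<^sub>E (T \<times> UNIV)" using Fc by (auto simp: PiE_iff mem_Times_iff)
        then show ?thesis using True by simp
      qed (use Fc in simp)
    next
      show "F \<in> extensional {..<m}" using F by (auto simp: kcnf_formulas_def PiE_iff)
    qed
  next
    assume F: "F \<in> (\<Pi>\<^sub>E c\<in>{..<m}. if c \<in> C then ({..<k} \<rightarrow>\<^sub>E (T \<times> UNIV)) else ({..<k} \<rightarrow>\<^sub>E literals n))"
    have "\<forall>c\<in>{..<m}. F c \<in> {..<k} \<rightarrow>\<^sub>E literals n"
    proof
      fix c assume c: "c \<in> {..<m}"
      show "F c \<in> {..<k} \<rightarrow>\<^sub>E literals n"
      proof (cases "c \<in> C")
        case True
        then have "F c \<in> {..<k} \<rightarrow>\<^sub>E (T \<times> UNIV)" using PiE_mem[OF F c] by simp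
        moreover have "T \<times> UNIV \<subseteq> literals n" using assms(2) by (auto simp: literals_def)
        ultimately show ?thesis using PiE_mono[of "{..<k}" "\<lambda>_. T \<times> UNIV" "\<lambda>_. literals n"] by blast
      next
        case False
        then show ?thesis using PiE_mem[OF F c] by simp
      qed
    qed
    moreover have "F \<in> extensional {..<m}" using F by (simp add: PiE_iff)
    ultimately have "F \<in> kcnf_formulas k n m" unfolding kcnf_formulas_def by (simp add: PiE_iff)
    moreover have "\<forall>c\<in>C. vbl k F c \<subseteq> T"
    proof
      fix c assume c: "c \<in> C"
      then have "c \<in> {..<m}" using assms(1) by auto
      then have "F c \<in> {..<k} \<rightarrow>\<^sub>E (T \<times> UNIV)" using PiE_mem[OF F, of c] c by simp
      then have "\<forall>j\<in>{..<k}. F c j \<in> T \<times> UNIV" by (simp add: PiE_iff)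
      then show "vbl k F c \<subseteq> T" unfolding vbl_def by force
    qed
    ultimately show "F \<in> kcnf_formulas k n m \<inter> {F. \<forall>c\<in>C. vbl k F c \<subseteq> T}" by simp
  qed
qed

lemma prob_event:
  assumes "C \<subseteq> {..<m}" "T \<subseteq> {..<n}" "n > 0"
  shows "measure_pmf.prob (random_kcnf k n m) {F. \<forall>c\<in>C. vbl k F c \<subseteq> T}
     = (real (card T) / real n) ^ (k * card C)"
proof -
  have fT: "finite T" using assms(2) finite_subset by blast
  have fC: "finite C" using assms(1) finite_subset by blast
  have cl: "card (literals n) = 2 * n" by (simp add: literals_def card_cartesian_product)
  have cT: "card (T \<times> (UNIV::bool set)) = 2 * card T" by (simp add: card_cartesian_product)
  have cO: "card (kcnf_formulas k n m) = ((2*n)^k)^m"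
    by (simp add: kcnf_formulas_def card_PiE cl power_mult_distrib)
  have fO: "finite (kcnf_formulas k n m)"
    by (simp add: kcnf_formulas_def literals_def finite_PiE)
  have nO: "kcnf_formulas k n m \<noteq> {}"
    using cO assms(3) fO by (metis card.empty nat_0_less_mult_iff pos2 power_not_zero zero_less_iff_neq_zero)
  have "card (kcnf_formulas k n m \<inter> {F. \<forall>c\<in>C. vbl k F c \<subseteq> T}) =
     (\<Prod>c\<in>{..<m}. if c \<in> C then (2 * card T)^k else (2*n)^k)"
    unfolding event_eq[OF assms(1,2)] by (simp add: card_PiE cl cT if_distrib cong: if_cong)
  also have "\<dots> = ((2 * card T)^k)^card C * ((2*n)^k)^(m - card C)"
  proof -
    have "{..<m} \<inter> C = C" using assms(1) by auto
    moreover have "card ({..<m} - C) = m - card C" using assms(1) fC by (simp add: card_Diff_subset)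
    moreover have "{..<m} \<inter> - C = {..<m} - C" by auto
    ultimately show ?thesis by (simp add: prod.If_cases del: power_mult_distrib)
  qed
  finally have ce: "card (kcnf_formulas k n m \<inter> {F. \<forall>c\<in>C. vbl k F c \<subseteq> T}) = \<dots>" .
  have cm: "card C \<le> m" using assms(1) by (metis card_lessThan card_mono finite_lessThan)
  have "measure_pmf.prob (random_kcnf k n m) {F. \<forall>c\<in>C. vbl k F c \<subseteq> T}
      = real (((2 * card T)^k)^card C * ((2*n)^k)^(m - card C)) / real (((2*n)^k)^m)"
    unfolding random_kcnf_def using measure_pmf_of_set[OF nO fO] ce cO by simp
  also have "\<dots> = (real (card T) / real n) ^ (k * card C)"
  proof -
    have "m = card C + (m - card C)" using cm by simp
    then have e: "((2*real n)^k)^m = ((2*real n)^k)^card C * ((2*real n)^k)^(m - card C)"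
      by (metis power_add)
    have p: "((2*real n)^k)^(m - card C) > 0" using assms(3) by simp
    have "real (((2 * card T)^k)^card C * ((2*n)^k)^(m - card C)) / real (((2*n)^k)^m)
       = ((2*real (card T))^k)^card C * ((2*real n)^k)^(m - card C) / (((2*real n)^k)^card C * ((2*real n)^k)^(m - card C))"
      using e by simp
    also have "\<dots> = ((2*real (card T))^k)^card C / ((2*real n)^k)^card C"
      using p assms(3) by simp
    also have "\<dots> = (((2*real (card T))^k) / ((2*real n)^k))^card C"
      by (rule power_divide[symmetric])
    also have "((2*real (card T))^k) / ((2*real n)^k) = (real (card T) / real n)^k"
      by (simp add: power_divide[symmetric])
    finally show ?thesis by (simp add: power_mult)
  qed
  finally show ?thesis .
qed



lemma double_count:
  fixes V :: "'a \<Rightarrow> 'b set" and C :: "'a set"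
  assumes fC: "finite C" and fV: "\<forall>c\<in>C. finite (V c)"
  shows "2 * card (\<Union>c\<in>C. V c) \<le> (\<Sum>c\<in>C. card (V c - (\<Union>c'\<in>C - {c}. V c'))) + (\<Sum>c\<in>C. card (V c))"
proof -
  define U where "U = (\<Union>c\<in>C. V c)"
  define mult where "mult x = card {c\<in>C. x \<in> V c}" for x
  define A where "A c = V c - (\<Union>c'\<in>C - {c}. V c')" for c
  define U1 where "U1 = {x\<in>U. mult x = 1}"
  have fU: "finite U" using fC fV U_def by auto
  have s1: "(\<Sum>c\<in>C. card (V c)) = (\<Sum>x\<in>U. mult x)"
  proof -
    have "(\<Sum>c\<in>C. card (V c)) = (\<Sum>c\<in>C. \<Sum>x\<in>U. if x \<in> V c then 1 else 0)"
    proof (rule sum.cong[OF refl])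
      fix c assume "c \<in> C"
      then have "V c \<subseteq> U" using U_def by auto
      then have "U \<inter> V c = V c" by auto
      then show "card (V c) = (\<Sum>x\<in>U. if x \<in> V c then 1 else 0)"
        using fU by (simp add: sum.If_cases)
    qed
    also have "\<dots> = (\<Sum>x\<in>U. \<Sum>c\<in>C. if x \<in> V c then 1 else 0)" by (rule sum.swap)
    also have "\<dots> = (\<Sum>x\<in>U. mult x)"
      unfolding mult_def using fC by (simp add: sum.If_cases Int_def conj_commute)
    finally show ?thesis .
  qed
  have s2: "(\<Sum>c\<in>C. card (A c)) = card U1"
  proof -
    have "(\<Sum>c\<in>C. card (A c)) = card (\<Union>c\<in>C. A c)"
      by (rule card_UN_disjoint[symmetric]) (use fC fV in \<open>auto simp: A_def\<close>)
    also have "(\<Union>c\<in>C. A c) = U1"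
    proof
      show "(\<Union>c\<in>C. A c) \<subseteq> U1"
      proof
        fix x assume "x \<in> (\<Union>c\<in>C. A c)"
        then obtain c where c: "c \<in> C" "x \<in> A c" by auto
        then have "{c\<in>C. x \<in> V c} = {c}" by (auto simp: A_def)
        then show "x \<in> U1" using c by (auto simp: U1_def mult_def U_def A_def)
      qed
    next
      show "U1 \<subseteq> (\<Union>c\<in>C. A c)"
      proof
        fix x assume "x \<in> U1"
        then have "card {c\<in>C. x \<in> V c} = 1" by (auto simp: U1_def mult_def)
        then obtain c where c: "{c\<in>C. x \<in> V c} = {c}" by (auto simp: card_Suc_eq)
        then have "c \<in> C" "x \<in> V c" by auto
        moreover have "x \<notin> (\<Union>c'\<in>C - {c}. V c')" using c by auto
        ultimately show "x \<in> (\<Union>c\<in>C. A c)" by (auto simp: A_def)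
      qed
    qed
    finally show ?thesis .
  qed
  have s3: "2 * card U \<le> card U1 + (\<Sum>x\<in>U. mult x)"
  proof -
    have "(\<Sum>x\<in>U. (if x \<in> U1 then 1 else 2)) \<le> (\<Sum>x\<in>U. mult x)"
    proof (rule sum_mono)
      fix x assume x: "x \<in> U"
      then obtain c where "c \<in> C" "x \<in> V c" using U_def by auto
      then have "{c\<in>C. x \<in> V c} \<noteq> {}" by auto
      moreover have "finite {c\<in>C. x \<in> V c}" using fC by auto
      ultimately have "mult x \<ge> 1" unfolding mult_def by (simp add: Suc_le_eq card_gt_0_iff)
      then show "(if x \<in> U1 then 1 else 2) \<le> mult x" using x by (auto simp: U1_def)
    qed
    moreover have "(\<Sum>x\<in>U. (if x \<in> U1 then 1 else 2::nat)) = card U1 + 2 * card (U - U1)"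
      using fU apply (simp add: sum.If_cases U1_def Int_def Diff_eq)
      by (rule arg_cong[where f=card]) auto
    moreover have "card U = card U1 + card (U - U1)"
      using fU by (metis U1_def card_Diff_subset finite_subset mem_Collect_eq subsetI
          card_mono le_add_diff_inverse)
    ultimately show ?thesis by linarith
  qed
  show ?thesis using s1 s2 s3 unfolding U_def[symmetric] A_def by simp
qed


lemma card_vbl_le: "card (vbl k F c) \<le> k"
proof -
  have "card (fst ` F c ` {..<k}) \<le> card (F c ` {..<k})" by (rule card_image_le) simp
  also have "\<dots> \<le> card {..<k}" by (rule card_image_le) simp
  finally show ?thesis unfolding vbl_def by simp
qed

lemma bad_card:
  fixes F :: "nat \<Rightarrow> nat \<Rightarrow> nat \<times> bool" and \<beta> :: real
  assumes fC: "finite C" and s: "card C = s" "s \<ge> 2" and b: "0 < \<beta>" "\<beta> < 1" and k8: "real k * (1 - \<beta>) \<ge> 8"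
    and bad: "\<not>(\<exists>c1\<in>C. \<exists>c2\<in>C. c1 \<noteq> c2 \<and>
           (\<forall>c\<in>{c1, c2}. real (card (vbl k F c - (\<Union>c'\<in>C - {c}. vbl k F c'))) \<ge> \<beta> * real k))"
  shows "card (\<Union>c\<in>C. vbl k F c) \<le> s*k - 4*(s-1)"
proof -
  define A where "A c = vbl k F c - (\<Union>c'\<in>C - {c}. vbl k F c')" for c
  have fV: "\<forall>c\<in>C. finite (vbl k F c)" by (simp add: vbl_def)
  have dc: "2 * card (\<Union>c\<in>C. vbl k F c) \<le> (\<Sum>c\<in>C. card (A c)) + (\<Sum>c\<in>C. card (vbl k F c))"
    using double_count[OF fC fV] unfolding A_def .
  have sV: "(\<Sum>c\<in>C. card (vbl k F c)) \<le> s * k"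
    using sum_mono[of C "\<lambda>c. card (vbl k F c)" "\<lambda>_. k"] card_vbl_le s by simp
  have "C \<noteq> {}" using s by auto
  obtain c0 where c0: "c0 \<in> C" "\<forall>c\<in>C - {c0}. real (card (A c)) < \<beta> * real k"
  proof (cases "\<exists>c\<in>C. real (card (A c)) \<ge> \<beta> * real k")
    case True
    then obtain c0 where c0: "c0 \<in> C" "real (card (A c0)) \<ge> \<beta> * real k" by auto
    have "\<forall>c\<in>C - {c0}. real (card (A c)) < \<beta> * real k"
    proof
      fix c assume c: "c \<in> C - {c0}"
      show "real (card (A c)) < \<beta> * real k"
      proof (rule ccontr)
        assume "\<not> ?thesis"
        then have "\<forall>d\<in>{c0, c}. real (card (A d)) \<ge> \<beta> * real k" using c0 by auto
        then show False using bad c c0 unfolding A_def by blast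
      qed
    qed
    then show ?thesis using that c0 by blast
  next
    case False
    then show ?thesis using that \<open>C \<noteq> {}\<close> by force
  qed
  have "real (\<Sum>c\<in>C. card (A c)) = real (card (A c0)) + (\<Sum>c\<in>C - {c0}. real (card (A c)))"
    using c0(1) fC by (simp add: sum.remove)
  also have "\<dots> \<le> real k + (\<Sum>c\<in>C - {c0}. \<beta> * real k)"
  proof (rule add_mono)
    have "card (A c0) \<le> k" unfolding A_def
      by (meson card_vbl_le Diff_subset card_mono fV c0(1) le_trans)
    then show "real (card (A c0)) \<le> real k" by simp
    show "(\<Sum>c\<in>C - {c0}. real (card (A c))) \<le> (\<Sum>c\<in>C - {c0}. \<beta> * real k)"
      using c0(2) by (intro sum_mono) (simp add: less_imp_le)
  qed
  also have "\<dots> = real k + (real s - 1) * \<beta> * real k"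
    using c0(1) fC s by (simp add: card_Diff_subset of_nat_diff)
  finally have sA: "real (\<Sum>c\<in>C. card (A c)) \<le> real k + (real s - 1) * \<beta> * real k" .
  have "2 * real (card (\<Union>c\<in>C. vbl k F c)) \<le> real k + (real s - 1) * \<beta> * real k + real s * real k"
  proof -
    have a: "real (2 * card (\<Union>c\<in>C. vbl k F c)) \<le> real (\<Sum>c\<in>C. card (A c)) + real (\<Sum>c\<in>C. card (vbl k F c))"
      using dc by (metis of_nat_add of_nat_le_iff)
    have b: "real (\<Sum>c\<in>C. card (vbl k F c)) \<le> real s * real k" using sV by (metis of_nat_le_iff of_nat_mult)
    show ?thesis using a b sA by simp
  qed
  also have "\<dots> = 2 * (real s * real k) - (real s - 1) * (real k * (1 - \<beta>))" by (simp add: algebra_simps)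
  also have "\<dots> \<le> 2 * (real s * real k) - (real s - 1) * 8"
    using k8 s by (intro diff_left_mono mult_left_mono) auto
  finally have "real (card (\<Union>c\<in>C. vbl k F c)) \<le> real s * real k - 4 * (real s - 1)" by simp
  moreover have "4 * (s - 1) \<le> s * k"
  proof -
    have "real k \<ge> 8" using mult_left_le[of "1-\<beta>" "real k"] k8 b by linarith
    then have "k \<ge> 4" by simp
    then show ?thesis by (metis diff_le_self mult.commute mult_le_mono)
  qed
  ultimately have "real (card (\<Union>c\<in>C. vbl k F c)) \<le> real (s*k - 4*(s-1))"
    using s by (simp add: of_nat_diff)
  then show ?thesis by (simp only: of_nat_le_iff)
qed



lemma pow_div_fact_le_exp: "(x::real) \<ge> 0 \<Longrightarrow> x ^ d / fact d \<le> exp x"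
proof -
  assume x: "x \<ge> 0"
  have su: "(\<lambda>n. x^n /\<^sub>R fact n) sums exp x" by (rule exp_converges)
  have "sum (\<lambda>n. x^n /\<^sub>R fact n) {d} \<le> suminf (\<lambda>n. x^n /\<^sub>R fact n)"
    by (rule sum_le_suminf) (use su x in \<open>auto simp: sums_iff\<close>)
  then show ?thesis using su by (simp add: sums_iff divide_inverse mult.commute)
qed

lemma term_bound:
  fixes n s k D :: nat
  assumes n: "n > 0" and D: "D + 4*(s-1) = s*k" and Dn: "D \<le> n"
  shows "real (n choose D) * (real D / real n) ^ (s*k) \<le> exp (real (s*k)) * (real (s*k) / real n) ^ (4*(s-1))"
proof -
  have c: "real (n choose D) \<le> real n ^ D / fact D"
  proof -
    have "(n choose D) * fact D \<le> n ^ D" by (rule binomial_fact_pow)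
    then have "real (n choose D) * fact D \<le> real n ^ D"
      by (metis of_nat_fact of_nat_le_iff of_nat_mult of_nat_power)
    then show ?thesis by (simp add: field_simps)
  qed
  have "(real D / real n) ^ (s*k) = (real D / real n) ^ D * (real D / real n) ^ (4*(s-1))"
    by (metis D power_add)
  then have "real (n choose D) * (real D / real n) ^ (s*k)
     = (real (n choose D) * (real D / real n) ^ D) * (real D / real n) ^ (4*(s-1))" by simp
  also have "\<dots> \<le> exp (real (s*k)) * (real (s*k) / real n) ^ (4*(s-1))"
  proof (rule mult_mono)
    have "real (n choose D) * (real D / real n) ^ D \<le> (real n ^ D / fact D) * (real D / real n) ^ D"
      by (rule mult_right_mono[OF c]) simp
    also have "\<dots> = real D ^ D / fact D" using n by (simp add: power_divide)
    also have "\<dots> \<le> exp (real D)" by (rule pow_div_fact_le_exp) simp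
    also have "\<dots> \<le> exp (real (s*k))" using D by (metis exp_le_cancel_iff le_add1 of_nat_le_iff)
    finally show "real (n choose D) * (real D / real n) ^ D \<le> exp (real (s*k))" .
    show "(real D / real n) ^ (4*(s-1)) \<le> (real (s*k) / real n) ^ (4*(s-1))"
      using D by (intro power_mono divide_right_mono) (metis le_add1 of_nat_le_iff, auto)
  qed auto
  finally show ?thesis .
qed

lemma lim1: "(\<lambda>n::nat. (ln (real n))^5 / (real n)^2) \<longlonglongrightarrow> 0" by real_asymp
lemma lim2: "(\<lambda>n::nat. (ln (real n))^4 / (real n)^3) \<longlonglongrightarrow> 0" by real_asymp
lemma lim3: "(\<lambda>n::nat. ln (real n) / real n) \<longlonglongrightarrow> 0" by real_asymp



lemma extend_subset:
  assumes "finite B" "A \<subseteq> B" "card A \<le> d" "d \<le> card B"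
  shows "\<exists>T. A \<subseteq> T \<and> T \<subseteq> B \<and> card T = d"
proof -
  have fA: "finite A" using assms finite_subset by blast
  have "d - card A \<le> card (B - A)" using assms fA by (simp add: card_Diff_subset)
  then obtain R where R: "R \<subseteq> B - A" "card R = d - card A" "finite R" by (rule obtain_subset_with_card_n)
  have "card (A \<union> R) = card A + card R" using R fA by (subst card_Un_disjoint) auto
  then show ?thesis using R assms by (intro exI[of _ "A \<union> R"]) auto
qed

lemma pmf_union_bound:
  assumes "finite I"
  shows "measure_pmf.prob p (\<Union>i\<in>I. A i) \<le> (\<Sum>i\<in>I. measure_pmf.prob p (A i))"
  by (rule measure_pmf.finite_measure_subadditive_finite) (use assms in auto)

lemma prob_restrict:
  assumes "n > 0"
  shows "measure_pmf.prob (random_kcnf k n m) A = measure_pmf.prob (random_kcnf k n m) (kcnf_formulas k n m \<inter> A)"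
proof -
  have fO: "finite (kcnf_formulas k n m)"
    by (simp add: kcnf_formulas_def literals_def finite_PiE)
  have "card (kcnf_formulas k n m) = ((2*n)^k)^m"
    by (simp add: kcnf_formulas_def card_PiE literals_def card_cartesian_product power_mult_distrib)
  then have nO: "kcnf_formulas k n m \<noteq> {}"
    using assms fO by (metis card.empty nat_0_less_mult_iff pos2 power_not_zero zero_less_iff_neq_zero)
  show ?thesis unfolding random_kcnf_def measure_pmf_of_set[OF nO fO] by (simp add: Int_assoc)
qed

lemma prob_bad_bound:
  fixes k n m :: nat and \<beta> :: real
  assumes n: "n > 0" and b: "0 < \<beta>" "\<beta> < 1" and k8: "real k * (1 - \<beta>) \<ge> 8"
    and Lk: "\<And>s. real s \<le> 2 * log 2 (real n) \<Longrightarrow> s * k \<le> n"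
  shows "measure_pmf.prob (random_kcnf k n m) {F. \<not> good_formula k \<beta> n m F} \<le>
    (\<Sum>s\<in>{2..nat \<lfloor>2 * log 2 (real n)\<rfloor>}. real (m choose s) * (real (n choose (s*k - 4*(s-1))) *
        (real (s*k - 4*(s-1)) / real n) ^ (s*k)))"
proof -
  define M where "M = random_kcnf k n m"
  define L where "L = 2 * log 2 (real n)"
  define S where "S = {2..nat \<lfloor>L\<rfloor>}"
  define D where "D s = s*k - 4*(s-1)" for s :: nat
  define Cs where "Cs s = {C. C \<subseteq> {..<m} \<and> card C = s}" for s
  define Ts where "Ts s = {T. T \<subseteq> {..<n} \<and> card T = D s}" for s
  define E where "E C T = {F. \<forall>c\<in>C. vbl k F c \<subseteq> T}" for C T
  have fCs: "finite (Cs s)" for s unfolding Cs_def by (rule finite_subset[of _ "Pow {..<m}"]) auto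
  have fTs: "finite (Ts s)" for s unfolding Ts_def by (rule finite_subset[of _ "Pow {..<n}"]) auto
  have sub: "kcnf_formulas k n m \<inter> {F. \<not> good_formula k \<beta> n m F} \<subseteq> (\<Union>s\<in>S. \<Union>C\<in>Cs s. \<Union>T\<in>Ts s. E C T)"
  proof
    fix F assume F: "F \<in> kcnf_formulas k n m \<inter> {F. \<not> good_formula k \<beta> n m F}"
    then obtain C where C: "C \<subseteq> {..<m}" "2 \<le> card C" "real (card C) \<le> L"
      and bad: "\<not>(\<exists>c1\<in>C. \<exists>c2\<in>C. c1 \<noteq> c2 \<and>
           (\<forall>c\<in>{c1, c2}. real (card (vbl k F c - (\<Union>c'\<in>C - {c}. vbl k F c'))) \<ge> \<beta> * real k))"
      unfolding good_formula_def L_def by blast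
    define s where "s = card C"
    have fC: "finite C" using C(1) finite_subset by blast
    have "int s \<le> \<lfloor>L\<rfloor>" using C(3) unfolding s_def by (simp add: le_floor_iff)
    then have sS: "s \<in> S" using C(2) unfolding S_def s_def by auto
    have CCs: "C \<in> Cs s" using C(1) unfolding Cs_def s_def by auto
    define U where "U = (\<Union>c\<in>C. vbl k F c)"
    have cU: "card U \<le> D s" unfolding U_def D_def
      by (rule bad_card[OF fC s_def[symmetric] _ b k8 bad]) (use C(2) s_def in simp)
    have Un: "U \<subseteq> {..<n}"
    proof
      fix x assume "x \<in> U"
      then obtain c j where cj: "c \<in> C" "j < k" "x = fst (F c j)" unfolding U_def vbl_def by auto
      then have "c < m" using C(1) by auto
      then have "F c j \<in> literals n" using F cj(2) unfolding kcnf_formulas_def by (auto simp: PiE_iff)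
      then show "x \<in> {..<n}" using cj(3) by (auto simp: literals_def)
    qed
    have "D s \<le> n" using Lk[of s] C(3) unfolding D_def s_def L_def by simp
    then obtain T where T: "U \<subseteq> T" "T \<subseteq> {..<n}" "card T = D s"
      using extend_subset[OF _ Un cU] by auto
    have "F \<in> E C T" using T(1) unfolding E_def U_def by auto
    moreover have "T \<in> Ts s" using T unfolding Ts_def by auto
    ultimately show "F \<in> (\<Union>s\<in>S. \<Union>C\<in>Cs s. \<Union>T\<in>Ts s. E C T)" using sS CCs by blast
  qed
  have "measure_pmf.prob M {F. \<not> good_formula k \<beta> n m F} = measure_pmf.prob M (kcnf_formulas k n m \<inter> {F. \<not> good_formula k \<beta> n m F})"
    unfolding M_def by (rule prob_restrict[OF n])
  also have "\<dots> \<le> measure_pmf.prob M (\<Union>s\<in>S. \<Union>C\<in>Cs s. \<Union>T\<in>Ts s. E C T)"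
    by (rule measure_pmf.finite_measure_mono[OF sub]) simp
  also have "\<dots> \<le> (\<Sum>s\<in>S. measure_pmf.prob M (\<Union>C\<in>Cs s. \<Union>T\<in>Ts s. E C T))"
    by (rule pmf_union_bound) (simp add: S_def)
  also have "\<dots> \<le> (\<Sum>s\<in>S. \<Sum>C\<in>Cs s. measure_pmf.prob M (\<Union>T\<in>Ts s. E C T))"
    by (intro sum_mono pmf_union_bound fCs)
  also have "\<dots> \<le> (\<Sum>s\<in>S. \<Sum>C\<in>Cs s. \<Sum>T\<in>Ts s. measure_pmf.prob M (E C T))"
    by (intro sum_mono pmf_union_bound fTs)
  also have "\<dots> = (\<Sum>s\<in>S. \<Sum>C\<in>Cs s. \<Sum>T\<in>Ts s. (real (D s) / real n) ^ (s*k))"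
  proof (intro sum.cong refl)
    fix s C T assume "s \<in> S" "C \<in> Cs s" "T \<in> Ts s"
    then have "C \<subseteq> {..<m}" "card C = s" "T \<subseteq> {..<n}" "card T = D s" unfolding Cs_def Ts_def by auto
    then show "measure_pmf.prob M (E C T) = (real (D s) / real n) ^ (s*k)"
      unfolding M_def E_def using prob_event[OF _ _ n] by (simp add: mult.commute)
  qed
  also have "\<dots> = (\<Sum>s\<in>S. real (m choose s) * (real (n choose D s) * (real (D s) / real n) ^ (s*k)))"
  proof (intro sum.cong refl)
    fix s
    have "card (Cs s) = m choose s" unfolding Cs_def using n_subsets[of "{..<m}" s] by simp
    moreover have "card (Ts s) = n choose D s" unfolding Ts_def using n_subsets[of "{..<n}" "D s"] by simp
    ultimately show "(\<Sum>C\<in>Cs s. \<Sum>T\<in>Ts s. (real (D s) / real n) ^ (s*k)) = real (m choose s) * (real (n choose D s) * (real (D s) / real n) ^ (s*k))"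
      by simp
  qed
  finally show ?thesis unfolding M_def S_def L_def D_def .
qed



lemma per_s:
  fixes \<alpha> L x y nr :: real and m s k :: nat
  assumes a: "\<alpha> > 0" and nr: "nr > 0" and s: "2 \<le> s" "real s \<le> L" and k: "k > 0"
    and x: "x = real k * L / nr" "0 < x" and y: "y = \<alpha> * nr * exp (real k) * x^4" "y \<le> 1"
    and m: "real m \<le> \<alpha> * nr"
  shows "real (m choose s) * (exp (real (s*k)) * (real (s*k) / nr) ^ (4*(s-1)))
     \<le> \<alpha>^2 * exp (real k)^2 * (real k * L)^4 / nr^2"
proof -
  have c1: "real (m choose s) \<le> (\<alpha> * nr) ^ s"
  proof -
    have "(m choose s) * fact s \<le> m ^ s" by (rule binomial_fact_pow)
    moreover have "(m choose s) \<le> (m choose s) * fact s" by (simp add: fact_ge_1)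
    ultimately have "m choose s \<le> m ^ s" by linarith
    then have "real (m choose s) \<le> real m ^ s" by (metis of_nat_le_iff of_nat_power)
    also have "\<dots> \<le> (\<alpha> * nr) ^ s" using m by (intro power_mono) auto
    finally show ?thesis .
  qed
  have c2: "(real (s*k) / nr) ^ (4*(s-1)) \<le> x ^ (4*(s-1))"
  proof -
    have "real (s*k) \<le> real k * L" using s(2) k by (simp add: mult.commute mult_right_mono)
    then show ?thesis unfolding x(1) using nr by (intro power_mono divide_right_mono) auto
  qed
  have "real (m choose s) * (exp (real (s*k)) * (real (s*k) / nr) ^ (4*(s-1)))
     \<le> (\<alpha> * nr) ^ s * (exp (real (s*k)) * x ^ (4*(s-1)))"
    using c1 c2 nr by (intro mult_mono) auto
  also have "\<dots> = y ^ s / x ^ 4"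
  proof -
    have e: "exp (real (s*k)) = exp (real k) ^ s"
      by (metis exp_of_nat_mult of_nat_mult mult.commute)
    have "x ^ (4*(s-1)) * x^4 = (x^4)^s"
      using s(1) by (metis Suc_diff_1 add.commute less_le_trans mult_Suc_right pos2 power_add power_mult)
    then have "x ^ (4*(s-1)) = (x^4)^s / x^4" using x(2) by (simp add: field_simps)
    then show ?thesis unfolding y(1) e by (simp add: power_mult_distrib)
  qed
  also have "\<dots> \<le> y ^ 2 / x ^ 4"
  proof -
    have "y \<ge> 0" unfolding y(1) using a nr x(2) by simp
    then have "y ^ s \<le> y ^ 2" using power_decreasing[OF s(1) _ y(2)] by simp
    then show ?thesis using x(2) by (simp add: divide_right_mono)
  qed
  also have "\<dots> = \<alpha>^2 * exp (real k)^2 * (real k * L)^4 / nr^2"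
  proof -
    have "L \<noteq> 0" using x by auto
    then show ?thesis unfolding y(1) x(1) using nr k by (simp add: field_simps power_mult_distrib)
  qed
  finally show ?thesis .
qed


lemma limA: "(\<lambda>n::nat. 2 * log 2 (real n) / real n) \<longlonglongrightarrow> 0" by real_asymp
lemma limB: "(\<lambda>n::nat. (2 * log 2 (real n))^4 / (real n)^3) \<longlonglongrightarrow> 0" by real_asymp
lemma limC: "(\<lambda>n::nat. (2 * log 2 (real n))^5 / (real n)^2) \<longlonglongrightarrow> 0" by real_asymp


theorem lemma4p14:
  fixes k :: nat and \<alpha> \<beta> :: real
  assumes "\<alpha> > 0" and "0 < \<beta>" and "\<beta> < 1" and "real k > 8 / (1 - \<beta>)"
  shows "(\<lambda>n. measure_pmf.prob (random_kcnf k n (nat \<lfloor>\<alpha> * real n\<rfloor>))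
              {F. good_formula k \<beta> n (nat \<lfloor>\<alpha> * real n\<rfloor>) F}) \<longlonglongrightarrow> 1"
proof -
  define m where "m n = nat \<lfloor>\<alpha> * real n\<rfloor>" for n :: nat
  define L where "L n = 2 * log 2 (real n)" for n :: nat
  define p where "p n = measure_pmf.prob (random_kcnf k n (m n)) {F. \<not> good_formula k \<beta> n (m n) F}" for n
  define B where "B n = \<alpha>^2 * exp (real k)^2 * real k ^ 4 * ((2 * log 2 (real n))^5 / (real n)^2)" for n :: nat
  have k8: "real k * (1 - \<beta>) \<ge> 8" using assms(3,4) by (simp add: divide_less_eq)
  have k4: "real k \<ge> 8" using mult_left_le[of "1-\<beta>" "real k"] k8 assms(2) by linarith
  then have kpos: "k > 0" by simp
  have B0: "B \<longlonglongrightarrow> 0" unfolding B_def by (rule tendsto_mult_right_zero[OF limC])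
  have ev1: "eventually (\<lambda>n. real k * (L n / real n) < 1) sequentially"
    using order_tendstoD(2)[OF tendsto_mult_right_zero[OF limA, of "real k"]] unfolding L_def by simp
  have ev2: "eventually (\<lambda>n. \<alpha> * exp (real k) * real k ^ 4 * (L n ^ 4 / real n ^ 3) < 1) sequentially"
    using order_tendstoD(2)[OF tendsto_mult_right_zero[OF limB, of "\<alpha> * exp (real k) * real k ^ 4"]]
    unfolding L_def by simp
  have ev3: "eventually (\<lambda>n::nat. n \<ge> 2) sequentially" by (rule eventually_ge_at_top)
  have ev: "eventually (\<lambda>n. 0 \<le> p n \<and> p n \<le> B n) sequentially"
    using ev1 ev2 ev3
  proof eventually_elim
    case (elim n)
    have n: "n > 0" using elim(3) by simp
    have nr: "real n > 0" using n by simp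
    have Lpos: "L n \<ge> 2" unfolding L_def using elim(3) by simp
    have kLn: "real k * L n \<le> real n" using elim(1) nr by (simp add: field_simps)
    have Lk: "s * k \<le> n" if "real s \<le> 2 * log 2 (real n)" for s
    proof -
      have "real (s * k) \<le> L n * real k" using that kpos unfolding L_def by (simp add: mult_right_mono)
      then have "real (s*k) \<le> real n" using kLn by (simp add: mult.commute)
      then show ?thesis by (simp only: of_nat_le_iff)
    qed
    define S where "S = {2..nat \<lfloor>L n\<rfloor>}"
    define D where "D s = s*k - 4*(s-1)" for s :: nat
    have pb: "p n \<le> (\<Sum>s\<in>S. real (m n choose s) * (real (n choose D s) * (real (D s) / real n) ^ (s*k)))"
      unfolding p_def S_def D_def L_def by (rule prob_bad_bound[OF n assms(2,3) k8 Lk])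
    define x where "x = real k * L n / real n"
    define y where "y = \<alpha> * real n * exp (real k) * x^4"
    have x0: "0 < x" unfolding x_def using kpos Lpos nr by simp
    have y1: "y \<le> 1"
    proof -
      have "y = \<alpha> * exp (real k) * real k ^ 4 * (L n ^ 4 / real n ^ 3)"
        unfolding y_def x_def using nr by (simp add: field_simps power_mult_distrib eval_nat_numeral)
      then show ?thesis using elim(2) by simp
    qed
    have mle: "real (m n) \<le> \<alpha> * real n" unfolding m_def using assms(1) by simp
    have tb: "real (m n choose s) * (real (n choose D s) * (real (D s) / real n) ^ (s*k))
        \<le> \<alpha>^2 * exp (real k)^2 * (real k * L n)^4 / (real n)^2" if s: "s \<in> S" for s
    proof -
      have s2: "2 \<le> s" and sN: "s \<le> nat \<lfloor>L n\<rfloor>" using s unfolding S_def by auto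
      have "real s \<le> real (nat \<lfloor>L n\<rfloor>)" using sN by (simp only: of_nat_le_iff)
      also have "\<dots> \<le> L n" using Lpos by simp
      finally have sL: "real s \<le> L n" .
      have k4': "4 \<le> k" using k4 by simp
      have "4*(s-1) \<le> s*4" by simp
      also have "s*4 \<le> s*k" using k4' by (rule mult_le_mono2)
      finally have "4*(s-1) \<le> s*k" .
      then have Deq: "D s + 4*(s-1) = s*k" unfolding D_def by simp
      have Dn: "D s \<le> n" using Lk[of s] sL unfolding D_def L_def by simp
      have "real (m n choose s) * (real (n choose D s) * (real (D s) / real n) ^ (s*k))
          \<le> real (m n choose s) * (exp (real (s*k)) * (real (s*k) / real n) ^ (4*(s-1)))"
        by (intro mult_left_mono term_bound[OF n Deq Dn]) simp
      also have "\<dots> \<le> \<alpha>^2 * exp (real k)^2 * (real k * L n)^4 / (real n)^2"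
        by (rule per_s[OF assms(1) nr s2 sL kpos x_def x0 y_def y1 mle])
      finally show ?thesis .
    qed
    have "p n \<le> (\<Sum>s\<in>S. \<alpha>^2 * exp (real k)^2 * (real k * L n)^4 / (real n)^2)"
      using pb tb by (meson order_trans sum_mono)
    also have "\<dots> = real (card S) * (\<alpha>^2 * exp (real k)^2 * (real k * L n)^4 / (real n)^2)" by simp
    also have "\<dots> \<le> L n * (\<alpha>^2 * exp (real k)^2 * (real k * L n)^4 / (real n)^2)"
    proof (rule mult_right_mono)
      have "card S = nat \<lfloor>L n\<rfloor> - 1" unfolding S_def by simp
      moreover have "real (nat \<lfloor>L n\<rfloor>) \<le> L n" using Lpos by simp
      ultimately show "real (card S) \<le> L n" by linarith
    qed simp
    also have "\<dots> = B n" unfolding B_def L_def using nr by (simp add: field_simps power_mult_distrib eval_nat_numeral)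
    finally have "p n \<le> B n" .
    moreover have "0 \<le> p n" unfolding p_def by simp
    ultimately show ?case by simp
  qed
  have p0: "p \<longlonglongrightarrow> 0"
    by (rule tendsto_sandwich[OF _ _ tendsto_const B0]) (use ev in \<open>auto elim: eventually_mono\<close>)
  have eq: "measure_pmf.prob (random_kcnf k n (nat \<lfloor>\<alpha> * real n\<rfloor>))
              {F. good_formula k \<beta> n (nat \<lfloor>\<alpha> * real n\<rfloor>) F} = 1 - p n" for n
  proof -
    have "{F. good_formula k \<beta> n (m n) F} = UNIV - {F. \<not> good_formula k \<beta> n (m n) F}" by auto
    then show ?thesis unfolding p_def m_def
      using measure_pmf.prob_compl[of "{F. \<not> good_formula k \<beta> n (nat \<lfloor>\<alpha> * real n\<rfloor>) F}" "random_kcnf k n (nat \<lfloor>\<alpha> * real n\<rfloor>)"]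
      by (simp add: m_def)
  qed
  show ?thesis unfolding eq using tendsto_diff[OF tendsto_const p0, of 1] by simp
qed

end
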